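(* There is a constant $c>0$ such that for all sufficiently large $n$ and every $\sigma\in[0,1]$, \[\min_x\left\{\frac{\binom{1-\sigma/2}{x-\sigma/2}_n+\binom{1-(1-\sigma)/2}{x}_n}{\binom{1/2}{x-\sigma/2}_n}\right\}\ \le\ 2^{n(1-h(1/4))}\,n^{c},\] where the minimum is over real $x$ with $0\le x-\sigma/2\le 1/2$ and $0\le x\le 1-(1-\sigma)/2$.
   Context: For reals $a\ge b\ge 0$, $\binom{a}{b}_n$ denotes the binomial coefficient $\binom{\lfloor an\rfloor}{\lfloor bn\rfloor}$. $h(x)=-x\log_2x-(1-x)\log_2(1-x)$ (with $h(0)=h(1)=0$) is the binary entropy function. *)

theory Defs
  imports Complex_Main
begin

definition bin_entropy :: "real \<Rightarrow> real" where
  "bin_entropy x = (if x = 0 \<or> x = 1 then 0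
     else - x * log 2 x - (1 - x) * log 2 (1 - x))"

text \<open>binom_n a b n denotes the binomial coefficient (floor(a n) choose floor(b n)),
  intended for reals a \<ge> b \<ge> 0 (so both floors are nonnegative).\<close>
definition binom_n :: "real \<Rightarrow> real \<Rightarrow> nat \<Rightarrow> real" where
  "binom_n a b n = real (nat \<lfloor>a * real n\<rfloor> choose nat \<lfloor>b * real n\<rfloor>)"

end

theory Submission
  imports Defs
begin


definition al :: real where "al = (ln 3 - ln 2) / (2 * ln 2)"

lemma al_bounds: "0 < al" "al \<le> 3/10"
proof -
  have l2: "ln 2 > (0::real)" by simp
  have "ln 2 < (ln 3::real)" by simp
  then show "0 < al" unfolding al_def using l2 by simp
  have "ln ((3::real)^5) \<le> ln ((2::real)^8)" by (subst ln_le_cancel_iff) auto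
  then have "real 5 * ln 3 \<le> real 8 * ln (2::real)" by (simp only: ln_realpow)
  then have "5 * ln 3 \<le> 8 * ln (2::real)" by simp
  then show "al \<le> 3/10" unfolding al_def using l2 by (simp add: field_simps)
qed

definition U :: "real \<Rightarrow> real" where "U s = 1 + (-1/2) * s"
definition V :: "real \<Rightarrow> real" where "V s = (3/4 + al/2) + (- (1/2 + al)) * s"
definition W :: "real \<Rightarrow> real" where "W s = (1/4 + al/2) + (- al) * s"

lemma UVW_lin: "U s = 1 - s/2" "V s = 3/4 + al/2 - s/2 - al*s" "W s = 1/4 + al/2 - al*s"
  unfolding U_def V_def W_def by (simp_all add: algebra_simps)

definition p :: "real \<Rightarrow> real" where
  "p s = U s * ln (U s) - V s * ln (V s) + W s * ln (W s) + ln 2 / 2"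
definition p1 :: "real \<Rightarrow> real" where
  "p1 s = (-1/2) * ln (U s) + (1/2 + al) * ln (V s) + (- al) * ln (W s)"
definition p2 :: "real \<Rightarrow> real" where
  "p2 s = 1 / (4 * U s) - (1/2 + al)^2 / V s + al^2 / W s"

lemma pos_UVW: assumes "0 \<le> s" "s \<le> 1" shows "U s \<ge> 1/2" "V s \<ge> 1/10" "W s \<ge> 1/10"
proof -
  have "al * s \<le> al" using mult_left_mono[of s 1 al] assms al_bounds by simp
  then show "U s \<ge> 1/2" "V s \<ge> 1/10" "W s \<ge> 1/10"
    using assms al_bounds unfolding UVW_lin by linarith+
qed

lemma aff_xlnx: assumes "c0 + c1*x > 0" shows
  "((\<lambda>s. (c0+c1*s) * ln (c0+c1*s)) has_real_derivative c1*(ln(c0+c1*x)+1)) (at x)"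
proof -
  have "((\<lambda>s. (c0+c1*s) * ln (c0+c1*s)) has_real_derivative
     (c1 * ln (c0+c1*x) + (c0+c1*x) * (c1 / (c0+c1*x)))) (at x)"
    using assms by (auto intro!: derivative_eq_intros)
  moreover have "(c0+c1*x) * (c1 / (c0+c1*x)) = c1" using assms by simp
  ultimately show ?thesis by (simp add: algebra_simps)
qed

lemma aff_ln: assumes "c0 + c1*x > 0" shows
  "((\<lambda>s. ln (c0+c1*s)) has_real_derivative c1/(c0+c1*x)) (at x)"
proof -
  have "((\<lambda>s. ln (c0+c1*s)) has_real_derivative (c1 / (c0+c1*x))) (at x)"
    using assms by (auto intro!: derivative_eq_intros simp: divide_inverse)
  then show ?thesis .
qed

lemma p_deriv: assumes "0 \<le> s" "s \<le> 1" shows "(p has_real_derivative p1 s) (at s)"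
proof -
  note P = pos_UVW[OF assms]
  have "((\<lambda>s. U s * ln (U s) - V s * ln (V s) + W s * ln (W s) + ln 2 / 2) has_real_derivative
     ((-1/2) * (ln (U s) + 1) - (-(1/2+al)) * (ln (V s) + 1) + (-al) * (ln (W s) + 1) + 0)) (at s)"
    unfolding U_def V_def W_def
    apply (intro DERIV_add DERIV_diff aff_xlnx DERIV_const)
    using P unfolding U_def V_def W_def by auto
  moreover have "(-1/2) * (ln (U s) + 1) - (-(1/2+al)) * (ln (V s) + 1) + (-al) * (ln (W s) + 1) + 0 = p1 s"
    unfolding p1_def by (simp add: field_simps)
  ultimately show ?thesis unfolding p_def[abs_def] by simp
qed

lemma p1_deriv: assumes "0 \<le> s" "s \<le> 1" shows "(p1 has_real_derivative p2 s) (at s)"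
proof -
  note P = pos_UVW[OF assms]
  have "((\<lambda>s. (-1/2) * ln (U s) + (1/2 + al) * ln (V s) + (- al) * ln (W s)) has_real_derivative
     ((-1/2) * ((-1/2) / U s) + (1/2 + al) * ((-(1/2+al)) / V s) + (-al) * ((-al) / W s))) (at s)"
    unfolding U_def V_def W_def
    apply (intro DERIV_add DERIV_cmult aff_ln)
    using P unfolding U_def V_def W_def by auto
  moreover have "(-1/2) * ((-1/2) / U s) + (1/2 + al) * ((-(1/2+al)) / V s) + (-al) * ((-al) / W s) = p2 s"
    unfolding p2_def by (simp add: field_simps power2_eq_square)
  ultimately show ?thesis unfolding p1_def[abs_def] by simp
qed

lemma p2_nonpos: assumes "0 \<le> s" "s \<le> 1" shows "p2 s \<le> 0"
proof -
  note P = pos_UVW[OF assms]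
  note A = al_bounds
  define F where "F = 4 * U s * (1/2+al)^2 * W s - V s * W s - 4 * U s * al^2 * V s"
  have Fid: "F = 1/16 + 3*al/4 - 3*al^2/4 - (al/2 + al^2) * (s - 1/2)"
    unfolding F_def UVW_lin by (simp add: algebra_simps power2_eq_square)
  have "(al/2 + al^2) * (s - 1/2) \<le> (al/2 + al^2) * (1/2)"
    using assms A by (intro mult_left_mono) auto
  moreover have "0 \<le> (1 - 2*al) * (1 + 10*al)" using A by (intro mult_nonneg_nonneg) auto
  ultimately have F0: "F \<ge> 0" unfolding Fid by (simp add: algebra_simps power2_eq_square)
  have "p2 s = - F / (4 * U s * V s * W s)"
    unfolding p2_def F_def using P by (simp add: field_simps power2_eq_square)
  then show ?thesis using F0 P by (simp add: divide_nonneg_pos)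
qed

lemma p1_half: "p1 (1/2) = 0"
proof -
  have u: "U (1/2) = 3/4" and v: "V (1/2) = 1/2" and w: "W (1/2) = 1/4"
    unfolding UVW_lin by (simp_all add: algebra_simps)
  have l34: "ln (3/4::real) = ln 3 - 2 * ln 2"
    by (simp add: ln_div ln_realpow[of 2 2, simplified])
  have l12: "ln (1/2::real) = - ln 2" by (simp add: ln_div)
  have l14: "ln (1/4::real) = - 2 * ln 2"
    by (simp add: ln_div ln_realpow[of 2 2, simplified])
  have a: "al * ln 2 = (ln 3 - ln 2) / 2" unfolding al_def by simp
  show ?thesis unfolding p1_def u v w l34 l12 l14
    using a by (simp add: algebra_simps)
qed

lemma p_half: "p (1/2) = 3/4 * ln 3 - ln 2"
proof -
  have u: "U (1/2) = 3/4" and v: "V (1/2) = 1/2" and w: "W (1/2) = 1/4"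
    unfolding UVW_lin by (simp_all add: algebra_simps)
  have l34: "ln (3/4::real) = ln 3 - 2 * ln 2"
    by (simp add: ln_div ln_realpow[of 2 2, simplified])
  have l12: "ln (1/2::real) = - ln 2" by (simp add: ln_div)
  have l14: "ln (1/4::real) = - 2 * ln 2"
    by (simp add: ln_div ln_realpow[of 2 2, simplified])
  show ?thesis unfolding p_def u v w l34 l12 l14 by (simp add: algebra_simps)
qed

lemma p_le: assumes "0 \<le> s" "s \<le> 1" shows "p s \<le> 3/4 * ln 3 - ln 2"
proof (cases "s \<le> 1/2")
  case True
  have "p s \<le> p (1/2)"
  proof (rule DERIV_nonneg_imp_nondecreasing[OF True])
    fix t assume t: "s \<le> t" "t \<le> 1/2"
    have "p1 (1/2) \<le> p1 t"
      by (rule DERIV_nonpos_imp_nonincreasing[OF t(2)])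
         (use t assms in \<open>auto intro!: exI[of _ "p2 _"] p1_deriv p2_nonpos\<close>)
    then show "\<exists>y. DERIV p t :> y \<and> 0 \<le> y" using p_deriv[of t] t assms p1_half by auto
  qed
  then show ?thesis using p_half by simp
next
  case False
  have "p s \<le> p (1/2)"
  proof (rule DERIV_nonpos_imp_nonincreasing[of "1/2" s])
    show "1/2 \<le> s" using False by simp
    fix t assume t: "1/2 \<le> t" "t \<le> s"
    have "p1 t \<le> p1 (1/2)"
      by (rule DERIV_nonpos_imp_nonincreasing[OF t(1)])
         (use t assms in \<open>auto intro!: exI[of _ "p2 _"] p1_deriv p2_nonpos\<close>)
    then show "\<exists>y. DERIV p t :> y \<and> y \<le> 0" using p_deriv[of t] t assms p1_half by auto
  qed
  then show ?thesis using p_half by simp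
qed



lemma binom_term_le:
  fixes pp :: real assumes "0 \<le> pp" "pp \<le> 1" "K \<le> N"
  shows "real (N choose K) * pp^K * (1-pp)^(N-K) \<le> 1"
proof -
  have "(pp + (1-pp))^N = (\<Sum>k\<le>N. real (N choose k) * pp^k * (1-pp)^(N-k))"
    by (rule binomial_ring)
  then have s: "(\<Sum>k\<le>N. real (N choose k) * pp^k * (1-pp)^(N-k)) = 1" by simp
  have "real (N choose K) * pp^K * (1-pp)^(N-K) \<le> (\<Sum>k\<le>N. real (N choose k) * pp^k * (1-pp)^(N-k))"
    by (rule member_le_sum) (use assms in auto)
  then show ?thesis using s by simp
qed

lemma pow_exp: "(x::real) > 0 \<Longrightarrow> x ^ k = exp (real k * ln x)"
  by (metis exp_ln exp_of_nat_mult)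

lemma binom_upper:
  fixes a b :: real and n :: nat
  assumes b: "0 < b" "b < a"
  shows "real (nat \<lfloor>a * real n\<rfloor> choose nat \<lfloor>b * real n\<rfloor>)
     \<le> exp (real n * (- b * ln (b/a) - (a-b) * ln ((a-b)/a))) * (a/(a-b))"
proof -
  define N where "N = nat \<lfloor>a * real n\<rfloor>"
  define K where "K = nat \<lfloor>b * real n\<rfloor>"
  define pp where "pp = b/a"
  have a0: "a > 0" using b by simp
  have pp: "0 < pp" "pp < 1" unfolding pp_def using b by auto
  have qq: "1 - pp = (a-b)/a" unfolding pp_def using a0 by (simp add: field_simps)
  have rhs0: "0 \<le> exp (real n * (- b * ln (b/a) - (a-b) * ln ((a-b)/a))) * (a/(a-b))"
    using b by simp
  have "real (N choose K) \<le> exp (real n * (- b * ln (b/a) - (a-b) * ln ((a-b)/a))) * (a/(a-b))"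
  proof (cases "K \<le> N")
    case False
    then have "real (N choose K) = 0" by simp
    then show ?thesis using rhs0 by linarith

  next
    case True
    have K1: "real K \<le> b * real n" unfolding K_def using b by simp
    have K2: "real K \<ge> b * real n - 1" unfolding K_def using b by linarith
    have N1: "real N \<le> a * real n" unfolding N_def using b by simp
    have NK: "real (N - K) \<le> (a-b) * real n + 1" using True K2 N1 by (simp add: of_nat_diff algebra_simps)
    have lp: "ln pp < 0" using pp by simp
    have lq: "ln (1-pp) < 0" using pp by simp
    have t: "real (N choose K) * pp^K * (1-pp)^(N-K) \<le> 1"
      by (rule binom_term_le) (use pp True in auto)
    have pos: "pp^K * (1-pp)^(N-K) > 0" using pp by simp
    have "real (N choose K) \<le> 1 / (pp^K * (1-pp)^(N-K))"
      using t pos by (simp add: field_simps)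
    also have "\<dots> = exp (- (real K * ln pp) - real (N-K) * ln (1-pp))"
      using pp by (simp add: pow_exp exp_diff exp_minus field_simps)
    also have "\<dots> \<le> exp (- (b * real n * ln pp) - ((a-b) * real n + 1) * ln (1-pp))"
    proof -
      have "- (real K * ln pp) \<le> - (b * real n * ln pp)"
        using mult_right_mono_neg[OF K1 less_imp_le[OF lp]] by simp
      moreover have "- (real (N-K) * ln (1-pp)) \<le> - (((a-b) * real n + 1) * ln (1-pp))"
        using mult_right_mono_neg[OF NK less_imp_le[OF lq]] by simp
      ultimately show ?thesis by simp
    qed
    also have "\<dots> = exp (real n * (- b * ln (b/a) - (a-b) * ln ((a-b)/a))) * (a/(a-b))"
    proof -
      have "exp (- (b * real n * ln pp) - ((a-b) * real n + 1) * ln (1-pp))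
         = exp (real n * (- b * ln pp - (a-b) * ln (1-pp))) * exp (- ln (1-pp))"
        by (subst exp_add[symmetric]) (simp add: algebra_simps)
      also have "exp (- ln (1-pp)) = a/(a-b)" using pp qq by (simp add: exp_minus)
      finally show ?thesis unfolding qq by (simp add: pp_def)
    qed
    finally show ?thesis .
  qed
  then show ?thesis unfolding N_def K_def .
qed



lemma choose_rec_nat: "j < M \<Longrightarrow> (M - j) * (M choose j) = Suc j * (M choose Suc j)"
  using binomial_absorb_comp[of M j] binomial_absorption[of j M] by simp

lemma binom_lower:
  fixes g :: real and n :: nat
  assumes g: "1/10 \<le> g" "g \<le> 2/5" and n: "n \<ge> 1"
  shows "real (nat \<lfloor>1/2 * real n\<rfloor> choose nat \<lfloor>g * real n\<rfloor>)
    \<ge> exp (real n * (- g * ln (2*g) - (1/2 - g) * ln (1 - 2*g))) * (2*g*(1-2*g))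
        / ((real n + 1) * exp (2/(1-2*g)))"
proof -
  define M where "M = nat \<lfloor>1/2 * real n\<rfloor>"
  define L where "L = nat \<lfloor>g * real n\<rfloor>"
  define q where "q = 2*g"
  define t where "t j = real (M choose j) * q^j * (1-q)^(M-j)" for j
  define \<rho> where "\<rho> = 1 + 2 / ((1-q) * real n)"
  define Kc where "Kc = exp (2/(1-q))"
  have q: "1/5 \<le> q" "q \<le> 4/5" unfolding q_def using g by auto
  have nr: "real n \<ge> 1" using n by simp
  have LM: "L \<le> M" unfolding L_def M_def
    using g by (intro nat_mono floor_mono mult_right_mono) auto
  have rL1: "real L \<le> g * real n" unfolding L_def using g by simp
  have rL2: "real L > g * real n - 1" unfolding L_def using g by linarith
  have rM1: "real M \<le> real n / 2" unfolding M_def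
    using of_int_floor_le[of "1/2 * real n"] by simp
  have rM2: "real M > real n / 2 - 1" unfolding M_def by linarith
  have Mn: "M \<le> n" using rM1 by linarith
  have t0: "t j \<ge> 0" for j unfolding t_def using q by simp
  have rec: "t (Suc j) * (real (Suc j) * (1-q)) = t j * (real (M - j) * q)" if "j < M" for j
  proof -
    have e: "real (M - j) * real (M choose j) = real (Suc j) * real (M choose Suc j)"
      using choose_rec_nat[OF that] by (metis of_nat_mult)
    have p: "(1-q)^(M-j) = (1-q)^(M - Suc j) * (1-q)"
      using that by (metis Suc_diff_Suc power_Suc2)
    have "t (Suc j) * (real (Suc j) * (1-q))
       = (real (Suc j) * real (M choose Suc j)) * q^j * q * ((1-q)^(M - Suc j) * (1-q))"
      unfolding t_def by (simp only: power_Suc2 mult_ac)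
    also have "\<dots> = (real (M - j) * real (M choose j)) * q^j * q * (1-q)^(M-j)"
      unfolding e p ..
    also have "\<dots> = t j * (real (M - j) * q)" unfolding t_def by (simp only: mult_ac)
    finally show ?thesis .
  qed
  have B: "\<forall>d. d \<le> L \<longrightarrow> t (L - d) \<le> t L"
  proof
    fix d show "d \<le> L \<longrightarrow> t (L - d) \<le> t L"
    proof (induction d)
      case 0 then show ?case by simp
    next
      case (Suc d)
      show ?case
      proof
        assume d: "Suc d \<le> L"
        define j where "j = L - Suc d"
        have jS: "Suc j = L - d" unfolding j_def using d by simp
        have jM: "j < M" unfolding j_def using d LM by simp
        have r: "t (Suc j) * (real (Suc j) * (1-q)) = t j * (real (M - j) * q)" by (rule rec[OF jM])
        have sj: "real (Suc j) \<le> g * real n" using jS d rL1 by (simp add: of_nat_diff)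
        have mj: "real (M - j) \<ge> real M - real L + 1" using jM d unfolding j_def by (simp add: of_nat_diff)
        have mjpos: "real (M - j) > 0" using jM by simp
        have "real (Suc j) * (1-q) \<le> g * real n * (1-q)" using sj q by (intro mult_right_mono) auto
        also have "g * real n * (1-q) = (real n / 2 - g * real n) * q" unfolding q_def by (simp add: algebra_simps)
        also have "\<dots> \<le> real (M - j) * q" using mj rM2 rL1 q by (intro mult_right_mono) auto
        finally have le: "real (Suc j) * (1-q) \<le> real (M - j) * q" .
        have "t j * (real (M - j) * q) \<le> t (Suc j) * (real (M - j) * q)"
          unfolding r[symmetric] using le t0[of "Suc j"] by (intro mult_left_mono) auto
        then have "t j \<le> t (Suc j)" using mjpos q by (simp add: mult_le_cancel_right)
        also have "t (Suc j) \<le> t L" using Suc.IH d jS by simp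
        finally show "t (L - Suc d) \<le> t L" unfolding j_def .
      qed
    qed
  qed
  have rho1: "\<rho> \<ge> 1" unfolding \<rho>_def using q nr by simp
  have A: "\<forall>d. L + d \<le> M \<longrightarrow> t (L + d) \<le> \<rho>^d * t L"
  proof
    fix d show "L + d \<le> M \<longrightarrow> t (L + d) \<le> \<rho>^d * t L"
    proof (induction d)
      case 0 then show ?case by simp
    next
      case (Suc d)
      show ?case
      proof
        assume d: "L + Suc d \<le> M"
        define j where "j = L + d"
        have jM: "j < M" unfolding j_def using d by simp
        have r: "t (Suc j) * (real (Suc j) * (1-q)) = t j * (real (M - j) * q)" by (rule rec[OF jM])
        have sj: "real (Suc j) \<ge> g * real n" using rL2 unfolding j_def by simp
        have mj: "real (M - j) \<le> real n / 2 - g * real n + 1" using jM rM1 rL2 unfolding j_def by (simp add: of_nat_diff)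
        have sjpos: "real (Suc j) * (1-q) > 0" using q by simp
        have "real (M - j) * q \<le> (real n / 2 - g * real n + 1) * q" using mj q by (intro mult_right_mono) auto
        also have "\<dots> = \<rho> * (g * real n * (1-q))"
        proof -
          have "2 / ((1-q)*real n) * (g*real n*(1-q)) = 2*g" using q nr by (simp add: field_simps)
          then have "\<rho> * (g * real n * (1-q)) = g * real n * (1-q) + 2*g"
            unfolding \<rho>_def by (simp add: distrib_right)
          then show ?thesis unfolding q_def by (simp add: algebra_simps)
        qed
        also have "\<dots> \<le> \<rho> * (real (Suc j) * (1-q))" using sj q rho1 by (intro mult_left_mono mult_right_mono) auto
        finally have le: "real (M - j) * q \<le> \<rho> * (real (Suc j) * (1-q))" .
        have "t (Suc j) * (real (Suc j) * (1-q)) \<le> (\<rho> * t j) * (real (Suc j) * (1-q))"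
          unfolding r using mult_left_mono[OF le t0[of j]] by (simp add: algebra_simps)
        then have "t (Suc j) \<le> \<rho> * t j" using sjpos by (simp add: mult_le_cancel_right)
        also have "\<dots> \<le> \<rho> * (\<rho>^d * t L)" using Suc.IH d rho1 unfolding j_def by (intro mult_left_mono) auto
        finally show "t (L + Suc d) \<le> \<rho>^Suc d * t L" unfolding j_def by simp
      qed
    qed
  qed
  have Kc1: "Kc \<ge> 1" unfolding Kc_def using q by simp
  have rhon: "\<rho>^n \<le> Kc"
  proof -
    have "\<rho> \<le> exp (2 / ((1-q) * real n))" unfolding \<rho>_def by (rule exp_ge_add_one_self[unfolded add.commute[of _ 1]])
    then have "\<rho>^n \<le> exp (2 / ((1-q) * real n))^n" using rho1 by (intro power_mono) auto
    also have "\<dots> = exp (real n * (2 / ((1-q) * real n)))" by (rule exp_of_nat_mult[symmetric])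
    also have "real n * (2 / ((1-q) * real n)) = 2/(1-q)" using nr q by (simp add: field_simps)
    finally show ?thesis unfolding Kc_def .
  qed
  have all: "t j \<le> Kc * t L" if "j \<le> M" for j
  proof (cases "j \<le> L")
    case True
    then have "t j \<le> t L" using B[rule_format, of "L - j"] by simp
    also have "\<dots> \<le> Kc * t L" using Kc1 t0[of L] by (simp add: mult_le_cancel_right1)
    finally show ?thesis .
  next
    case False
    define d where "d = j - L"
    have jd: "j = L + d" unfolding d_def using False by simp
    have "t j \<le> \<rho>^d * t L" using A[rule_format, of d] that jd by simp
    also have "\<rho>^d \<le> \<rho>^n" using rho1 jd that Mn by (intro power_increasing) auto
    then have "\<rho>^d * t L \<le> Kc * t L" using rhon t0[of L] by (intro mult_right_mono) auto
    finally show ?thesis .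
  qed
  have "1 = (q + (1-q))^M" by simp
  also have "\<dots> = (\<Sum>j\<le>M. t j)" unfolding t_def by (rule binomial_ring)
  also have "\<dots> \<le> real (card {..M}) * (Kc * t L)" by (rule sum_bounded_above) (use all in auto)
  finally have "1 \<le> (real M + 1) * Kc * t L" by (simp add: mult_ac add.commute)
  then have tL: "1 / ((real n + 1) * Kc) \<le> t L"
  proof -
    assume h: "1 \<le> (real M + 1) * Kc * t L"
    have "(real M + 1) * Kc * t L \<le> (real n + 1) * Kc * t L"
      using Mn Kc1 t0[of L] by (intro mult_right_mono) auto
    then have "1 \<le> (real n + 1) * Kc * t L" using h by linarith
    moreover have Xp: "(real n + 1) * Kc > 0" using Kc1 by simp
    have "1 / ((real n + 1) * Kc) \<le> t L \<longleftrightarrow> 1 \<le> t L * ((real n + 1) * Kc)"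
      by (rule pos_divide_le_eq[OF Xp])
    moreover have "t L * ((real n + 1) * Kc) = (real n + 1) * Kc * t L" by simp
    ultimately show ?thesis using \<open>1 \<le> (real n + 1) * Kc * t L\<close> by simp
  qed
  have qpos: "q^L * (1-q)^(M-L) > 0" using q by simp
  have Ceq: "real (M choose L) = t L * (1 / (q^L * (1-q)^(M-L)))"
  proof -
    have "q \<noteq> 0" "q \<noteq> 1" using q by auto
    then show ?thesis unfolding t_def using qpos by (simp add: divide_simps)
  qed
  have lq: "ln q < 0" "ln (1-q) < 0" using q by auto
  have "1 / (q^L * (1-q)^(M-L)) = exp (- (real L * ln q) - real (M-L) * ln (1-q))"
    using q by (simp add: pow_exp exp_diff exp_minus field_simps)
  also have "\<dots> \<ge> exp (- ((g * real n - 1) * ln q) - ((1/2 - g) * real n - 1) * ln (1-q))"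
  proof -
    have a1: "- (real L * ln q) \<ge> - ((g * real n - 1) * ln q)"
      using mult_right_mono_neg[of "g * real n - 1" "real L" "ln q"] rL2 lq by simp
    have hML: "real (M - L) \<ge> (1/2 - g) * real n - 1" using LM rM2 rL1 by (simp add: of_nat_diff algebra_simps)
    have a2: "- (real (M-L) * ln (1-q)) \<ge> - (((1/2 - g) * real n - 1) * ln (1-q))"
      using mult_right_mono_neg[OF hML] lq by simp
    show ?thesis using a1 a2 by simp
  qed
  finally have E: "exp (- ((g * real n - 1) * ln q) - ((1/2 - g) * real n - 1) * ln (1-q))
     \<le> 1 / (q^L * (1-q)^(M-L))" .
  have E2: "exp (- ((g * real n - 1) * ln q) - ((1/2 - g) * real n - 1) * ln (1-q))
      = exp (real n * (- g * ln q - (1/2 - g) * ln (1 - q))) * (q * (1-q))"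
  proof -
    have "exp (- ((g * real n - 1) * ln q) - ((1/2 - g) * real n - 1) * ln (1-q))
        = exp (real n * (- g * ln q - (1/2 - g) * ln (1 - q)) + (ln q + ln (1-q)))"
      by (simp add: algebra_simps)
    also have "\<dots> = exp (real n * (- g * ln q - (1/2 - g) * ln (1 - q))) * (q * (1-q))"
      using q by (simp add: exp_add)
    finally show ?thesis .
  qed
  have "exp (real n * (- g * ln q - (1/2 - g) * ln (1 - q))) * (q * (1-q)) / ((real n + 1) * Kc)
      = (1 / ((real n + 1) * Kc)) * (exp (real n * (- g * ln q - (1/2 - g) * ln (1 - q))) * (q * (1-q)))"
    by simp
  also have "\<dots> \<le> t L * (1 / (q^L * (1-q)^(M-L)))"
    using tL E E2 t0[of L] q by (intro mult_mono) auto
  also have "\<dots> = real (M choose L)" using Ceq by simp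
  finally show ?thesis unfolding M_def L_def q_def Kc_def .
qed



lemma Hform: fixes a b :: real assumes "0 < b" "b < a"
  shows "- b * ln (b/a) - (a-b) * ln ((a-b)/a) = a * ln a - b * ln b - (a-b) * ln (a-b)"
proof -
  have l1: "ln (b/a) = ln b - ln a" and l2: "ln ((a-b)/a) = ln (a-b) - ln a"
    using assms by (simp_all add: ln_div)
  show ?thesis unfolding l1 l2 by (simp add: algebra_simps)
qed

lemma H0form: fixes g :: real assumes "0 < g" "g < 1/2"
  shows "- g * ln (2*g) - (1/2-g) * ln (1 - 2*g) = - ln 2 / 2 - g * ln g - (1/2-g) * ln (1/2-g)"
proof -
  have "ln (2*g) = ln 2 + ln g" using assms by (simp add: ln_mult)
  moreover have "ln (1 - 2*g) = ln 2 + ln (1/2 - g)"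
    using assms ln_mult[of 2 "1/2 - g"] by (simp add: algebra_simps)
  ultimately show ?thesis by (simp add: algebra_simps)
qed

definition gg :: "real \<Rightarrow> real" where "gg s = 1/4 - al/2 + al * s"

lemma gg_bounds: assumes "0 \<le> s" "s \<le> 1" shows "1/10 \<le> gg s" "gg s \<le> 2/5"
proof -
  have "al * s \<le> al" "0 \<le> al * s" using mult_left_mono[of s 1 al] assms al_bounds by auto
  then show "1/10 \<le> gg s" "gg s \<le> 2/5" unfolding gg_def using al_bounds by linarith+
qed

lemma e1_id: assumes "0 \<le> s" "s \<le> 1"
  shows "- gg s * ln (gg s / (1 - s/2)) - ((1 - s/2) - gg s) * ln (((1 - s/2) - gg s) / (1 - s/2))
    = (- gg s * ln (2 * gg s) - (1/2 - gg s) * ln (1 - 2 * gg s)) + p s"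
proof -
  note G = gg_bounds[OF assms]
  note P = pos_UVW[OF assms]
  have u: "U s = 1 - s/2" and v: "V s = (1 - s/2) - gg s" and w: "W s = 1/2 - gg s"
    unfolding UVW_lin gg_def by (simp_all add: algebra_simps)
  have lt: "gg s < 1 - s/2" using P v by simp
  have g0: "0 < gg s" "gg s < 1/2" using G by auto
  show ?thesis
    unfolding Hform[OF g0(1) lt] H0form[OF g0] p_def u v w by (simp add: algebra_simps)
qed

lemma e2_id: assumes "0 \<le> s" "s \<le> 1"
  shows "- (s/2 + gg s) * ln ((s/2 + gg s) / (1 - (1-s)/2))
     - ((1 - (1-s)/2) - (s/2 + gg s)) * ln (((1 - (1-s)/2) - (s/2 + gg s)) / (1 - (1-s)/2))
    = (- gg s * ln (2 * gg s) - (1/2 - gg s) * ln (1 - 2 * gg s)) + p (1 - s)"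
proof -
  have s': "0 \<le> 1 - s" "1 - s \<le> 1" using assms by auto
  note G = gg_bounds[OF assms]
  note P = pos_UVW[OF s']
  have u: "U (1-s) = 1 - (1-s)/2" and v: "V (1-s) = s/2 + gg s" and w: "W (1-s) = gg s"
    unfolding UVW_lin gg_def right_diff_distrib mult_1_right by argo+
  have d: "(1 - (1-s)/2) - (s/2 + gg s) = 1/2 - gg s" by argo
  have lt: "s/2 + gg s < 1 - (1-s)/2" using G by argo
  have b0: "0 < s/2 + gg s" using G assms by argo
  have g0: "0 < gg s" "gg s < 1/2" using G by auto
  show ?thesis
    unfolding Hform[OF b0 lt] unfolding d H0form[OF g0] p_def u v w by (simp add: algebra_simps)
qed



lemma rhs_eq: "2 powr (real n * (1 - bin_entropy (1/4))) = exp (real n * (3/4 * ln 3 - ln 2))"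
proof -
  have l14: "ln (1/4::real) = - 2 * ln 2"
    by (simp add: ln_div ln_realpow[of 2 2, simplified])
  have l34: "ln (3/4::real) = ln 3 - 2 * ln 2"
    by (simp add: ln_div ln_realpow[of 2 2, simplified])
  have h: "bin_entropy (1/4) = 2 - 3/4 * ln 3 / ln 2"
    unfolding bin_entropy_def log_def using l14 l34 by (simp add: field_simps)
  have "2 powr (real n * (1 - bin_entropy (1/4))) = exp (ln 2 * (real n * (1 - bin_entropy (1/4))))"
    by (simp add: powr_def)
  also have "ln 2 * (real n * (1 - bin_entropy (1/4))) = real n * (3/4 * ln 3 - ln 2)"
    unfolding h by (simp add: field_simps)
  finally show ?thesis .
qed

theorem mainTheorem13:
  shows "\<exists>c::real > 0. \<exists>N::nat. \<forall>n \<ge> N. \<forall>\<sigma>::real \<in> {0..1}.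
    (INF x \<in> {x::real. 0 \<le> x - \<sigma>/2 \<and> x - \<sigma>/2 \<le> 1/2 \<and> 0 \<le> x \<and> x \<le> 1 - (1 - \<sigma>)/2}.
       (binom_n (1 - \<sigma>/2) (x - \<sigma>/2) n + binom_n (1 - (1 - \<sigma>)/2) x n)
         / binom_n (1/2) (x - \<sigma>/2) n)
    \<le> 2 powr (real n * (1 - bin_entropy (1/4))) * real n powr c"
proof (intro exI conjI allI impI ballI)
  define K0 :: real where "K0 = 1000 * exp 10"
  show "(2::real) > 0" by simp
  fix n :: nat and \<sigma> :: real
  assume nN: "nat \<lceil>K0\<rceil> + 1 \<le> n" and s: "\<sigma> \<in> {0..1}"
  have s0: "0 \<le> \<sigma>" "\<sigma> \<le> 1" using s by auto
  have nK: "real n \<ge> K0" using nN by linarith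
  have n1: "n \<ge> 1" using nN by simp
  have nr: "real n \<ge> 1" using n1 by simp
  define S where "S = {x::real. 0 \<le> x - \<sigma>/2 \<and> x - \<sigma>/2 \<le> 1/2 \<and> 0 \<le> x \<and> x \<le> 1 - (1 - \<sigma>)/2}"
  define f where "f x = (binom_n (1 - \<sigma>/2) (x - \<sigma>/2) n + binom_n (1 - (1 - \<sigma>)/2) x n)
         / binom_n (1/2) (x - \<sigma>/2) n" for x
  define g where "g = gg \<sigma>"
  have G: "1/10 \<le> g" "g \<le> 2/5" unfolding g_def using gg_bounds[OF s0] by auto
  define x0 where "x0 = \<sigma>/2 + g"
  have x0g: "x0 - \<sigma>/2 = g" unfolding x0_def by simp
  have e12: "1 - (1 - \<sigma>)/2 = 1/2 + \<sigma>/2" by argo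
  have mem: "x0 \<in> S" unfolding S_def x0_def e12 using G s0 by auto
  have bdd: "bdd_below (f ` S)"
    by (rule bdd_belowI[of _ 0]) (auto simp: f_def binom_n_def)
  have INFle: "(INF x \<in> S. f x) \<le> f x0" by (rule cINF_lower[OF bdd mem])
  define e0 where "e0 = - g * ln (2*g) - (1/2 - g) * ln (1 - 2*g)"
  define \<tau> where "\<tau> = 3/4 * ln 3 - ln (2::real)"
  define Ee where "Ee = exp (real n * e0)"
  define X where "X = exp (real n * \<tau>)"
  have Ee0: "Ee > 0" "X > 0" unfolding Ee_def X_def by auto
  have C1: "binom_n (1 - \<sigma>/2) g n \<le> 10 * (Ee * X)"
  proof -
    have V: "V \<sigma> = (1 - \<sigma>/2) - g" unfolding UVW_lin g_def gg_def by argo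
    have Vb: "V \<sigma> \<ge> 1/10" using pos_UVW[OF s0] by simp
    have lt: "g < 1 - \<sigma>/2" using V Vb by linarith
    have "binom_n (1 - \<sigma>/2) g n \<le> exp (real n * (- g * ln (g/(1 - \<sigma>/2)) - ((1 - \<sigma>/2) - g) * ln (((1 - \<sigma>/2) - g)/(1 - \<sigma>/2)))) * ((1 - \<sigma>/2)/((1 - \<sigma>/2) - g))"
      unfolding binom_n_def using binom_upper[of g "1 - \<sigma>/2" n] G lt by simp
    also have "\<dots> = exp (real n * (e0 + p \<sigma>)) * ((1 - \<sigma>/2)/((1 - \<sigma>/2) - g))"
      unfolding g_def e0_def using e1_id[OF s0] by (simp add: g_def)
    also have "\<dots> \<le> (Ee * X) * 10"
    proof (rule mult_mono)
      have "real n * p \<sigma> \<le> real n * \<tau>" unfolding \<tau>_def using p_le[OF s0] by (intro mult_left_mono) auto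
      then have "exp (real n * (e0 + p \<sigma>)) \<le> exp (real n * e0 + real n * \<tau>)" by (simp add: algebra_simps)
      then show "exp (real n * (e0 + p \<sigma>)) \<le> Ee * X" unfolding Ee_def X_def by (simp add: exp_add)
      have "(1 - \<sigma>/2)/((1 - \<sigma>/2) - g) \<le> 1 / (1/10)"
        using V Vb s0 by (intro frac_le) auto
      then show "(1 - \<sigma>/2)/((1 - \<sigma>/2) - g) \<le> 10" by simp
    qed (use Ee0 V Vb s0 in auto)
    finally show ?thesis by simp
  qed
  have C2: "binom_n (1 - (1 - \<sigma>)/2) x0 n \<le> 10 * (Ee * X)"
  proof -
    have s1: "0 \<le> 1 - \<sigma>" "1 - \<sigma> \<le> 1" using s0 by auto
    have d: "(1 - (1 - \<sigma>)/2) - (\<sigma>/2 + g) = 1/2 - g" by argo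
    have lt: "\<sigma>/2 + g < 1 - (1 - \<sigma>)/2" using d G by linarith
    have b0: "0 < \<sigma>/2 + g" using G s0 by simp
    have "binom_n (1 - (1 - \<sigma>)/2) x0 n \<le> exp (real n * (- (\<sigma>/2 + g) * ln ((\<sigma>/2 + g) / (1 - (1-\<sigma>)/2))
     - ((1 - (1-\<sigma>)/2) - (\<sigma>/2 + g)) * ln (((1 - (1-\<sigma>)/2) - (\<sigma>/2 + g)) / (1 - (1-\<sigma>)/2)))) * ((1 - (1-\<sigma>)/2)/((1 - (1-\<sigma>)/2) - (\<sigma>/2 + g)))"
      unfolding binom_n_def x0_def using binom_upper[OF b0 lt, of n] by simp
    also have "\<dots> = exp (real n * (e0 + p (1 - \<sigma>))) * ((1 - (1-\<sigma>)/2)/((1 - (1-\<sigma>)/2) - (\<sigma>/2 + g)))"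
      unfolding g_def e0_def using e2_id[OF s0] by (simp add: g_def)
    also have "\<dots> \<le> (Ee * X) * 10"
    proof (rule mult_mono)
      have "real n * p (1 - \<sigma>) \<le> real n * \<tau>" unfolding \<tau>_def using p_le[OF s1] by (intro mult_left_mono) auto
      then have "exp (real n * (e0 + p (1 - \<sigma>))) \<le> exp (real n * e0 + real n * \<tau>)" by (simp add: algebra_simps)
      then show "exp (real n * (e0 + p (1 - \<sigma>))) \<le> Ee * X" unfolding Ee_def X_def by (simp add: exp_add)
      have "(1 - (1-\<sigma>)/2)/((1 - (1-\<sigma>)/2) - (\<sigma>/2 + g)) \<le> 1 / (1/10)"
        unfolding d using G s0 e12 by (intro frac_le) auto
      then show "(1 - (1-\<sigma>)/2)/((1 - (1-\<sigma>)/2) - (\<sigma>/2 + g)) \<le> 10" by simp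
    qed (use Ee0 d G s0 e12 in auto)
    finally show ?thesis by simp
  qed
  define Dl where "Dl = Ee / (25 * (real n + 1) * exp 10)"
  have Dl0: "Dl > 0" unfolding Dl_def using Ee0 by simp
  have Dge: "binom_n (1/2) g n \<ge> Dl"
  proof -
    have "binom_n (1/2) g n \<ge> exp (real n * (- g * ln (2*g) - (1/2 - g) * ln (1 - 2*g))) * (2*g*(1-2*g))
        / ((real n + 1) * exp (2/(1-2*g)))"
      unfolding binom_n_def using binom_lower[OF G n1] by simp
    moreover have "Dl \<le> exp (real n * (- g * ln (2*g) - (1/2 - g) * ln (1 - 2*g))) * (2*g*(1-2*g))
        / ((real n + 1) * exp (2/(1-2*g)))"
    proof -
      have q1: "1/25 \<le> 2*g*(1-2*g)"
      proof -
        have "(1/5) * (1/5) \<le> (2*g) * (1-2*g)" using G by (intro mult_mono) auto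
        then show ?thesis by simp
      qed
      have q2: "exp (2/(1-2*g)) \<le> exp 10"
      proof -
        have "2/(1-2*g) \<le> 2/(1/5)" using G by (intro divide_left_mono) auto
        then show ?thesis by simp
      qed
      have "Dl = Ee * (1/25) / ((real n + 1) * exp 10)" unfolding Dl_def by simp
      also have "\<dots> \<le> Ee * (2*g*(1-2*g)) / ((real n + 1) * exp (2/(1-2*g)))"
        using q1 q2 Ee0 by (intro frac_le mult_left_mono mult_pos_pos) auto
      finally show ?thesis unfolding Ee_def e0_def .
    qed
    ultimately show ?thesis by linarith
  qed
  have D0: "binom_n (1/2) g n > 0" using Dge Dl0 by linarith
  have "f x0 = (binom_n (1 - \<sigma>/2) g n + binom_n (1 - (1 - \<sigma>)/2) x0 n) / binom_n (1/2) g n"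
    unfolding f_def x0g ..
  also have "\<dots> \<le> (20 * (Ee * X)) / Dl"
    using C1 C2 Dge Dl0 by (intro frac_le) (auto simp: binom_n_def)
  also have "\<dots> = 500 * (real n + 1) * exp 10 * X" unfolding Dl_def using Ee0 by (simp add: field_simps)
  also have "\<dots> \<le> (real n * real n) * X"
  proof -
    have "500 * (real n + 1) * exp 10 \<le> K0 * real n" unfolding K0_def using nr by simp
    also have "\<dots> \<le> real n * real n" using nK nr by (intro mult_right_mono) auto
    finally show ?thesis using Ee0 by (intro mult_right_mono) auto
  qed
  also have "\<dots> = 2 powr (real n * (1 - bin_entropy (1/4))) * real n powr 2"
    unfolding rhs_eq X_def \<tau>_def using nr by (simp add: powr_realpow[symmetric] power2_eq_square)
  finally have "f x0 \<le> 2 powr (real n * (1 - bin_entropy (1/4))) * real n powr 2" .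
  with INFle show "(INF x \<in> {x::real. 0 \<le> x - \<sigma>/2 \<and> x - \<sigma>/2 \<le> 1/2 \<and> 0 \<le> x \<and> x \<le> 1 - (1 - \<sigma>)/2}.
       (binom_n (1 - \<sigma>/2) (x - \<sigma>/2) n + binom_n (1 - (1 - \<sigma>)/2) x n)
         / binom_n (1/2) (x - \<sigma>/2) n)
    \<le> 2 powr (real n * (1 - bin_entropy (1/4))) * real n powr 2"
    unfolding S_def f_def by simp
qed

end
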